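(* Let $f:[a,b]\to\mathbb R$ be bounded and continuous almost everywhere with $\mathcal{ER}(f)=[\inf_{[a,b]}f,\sup_{[a,b]}f]$. Let $\{\Lambda_n=\{\lambda_{1,n},\ldots,\lambda_{d_n,n}\}\}_n$ be a sequence of finite multisets of real numbers with $d_n\to\infty$, such that $\{\Lambda_n\}_n$ has an asymptotic distribution described by $f$, and $\Lambda_n\subseteq[\inf_{[a,b]}f-\epsilon_n,\sup_{[a,b]}f+\epsilon_n]$ for every $n$, for some $\epsilon_n\to0$. Then, for every asymptotically uniform grid $\{x_{i,n}\}_{i=1,\ldots,d_n}$ in $[a,b]$ with $\{x_{i,n}\}_{i=1,\ldots,d_n}\subset[a,b]$, if $\sigma_n,\tau_n$ are permutations of $\{1,\ldots,d_n\}$ such that $[f(x_{\sigma_n(1),n}),\ldots,f(x_{\sigma_n(d_n),n})]$ and $[\lambda_{\tau_n(1),n},\ldots,\lambda_{\tau_n(d_n),n}]$ are sorted in increasing order, then $$\max_{i=1,\ldots,d_n}|f(x_{\sigma_n(i),n})-\lambda_{\tau_n(i),n}|\to0\quad(n\to\infty).$$ In particular, $\min_\tau\max_{i=1,\ldots,d_n}|f(x_{i,n})-\lambda_{\tau(i),n}|\to0$, the minimum being over all permutations $\tau$ of $\{1,\ldots,d_n\}$.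
   Context: For measurable $f:[a,b]\to\mathbb R$, the essential range is $\mathcal{ER}(f)=\{z\in\mathbb R:\mu_1\{x:|f(x)-z|<\epsilon\}>0\ \forall\epsilon>0\}$ ($\mu_1$ Lebesgue measure). A sequence of points $\{x_{i,n}\}_{i=1,\ldots,d_n}$ with $d_n\to\infty$ is an asymptotically uniform grid in $[a,b]$ if $\max_{i=1,\ldots,d_n}|x_{i,n}-(a+i(b-a)/d_n)|\to0$ as $n\to\infty$. A sequence of finite multisets $\{\Lambda_n=\{\lambda_{1,n},\ldots,\lambda_{d_n,n}\}\}_n$ with $d_n\to\infty$ has an asymptotic distribution described by $f$ if $\lim_{n}\frac1{d_n}\sum_{i=1}^{d_n}F(\lambda_{i,n})=\frac1{b-a}\int_a^bF(f(x))\,dx$ for every continuous $F:\mathbb C\to\mathbb C$ with bounded support. *)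

theory Defs
  imports "HOL-Analysis.Analysis" "HOL-Combinatorics.Permutations"
begin

definition essential_range :: "(real \<Rightarrow> real) \<Rightarrow> real \<Rightarrow> real \<Rightarrow> real set" where
  "essential_range f a b =
     {z. \<forall>e>0. emeasure lebesgue {x \<in> {a..b}. \<bar>f x - z\<bar> < e} > 0}"

definition asymptotically_uniform_grid ::
    "(nat \<Rightarrow> nat \<Rightarrow> real) \<Rightarrow> (nat \<Rightarrow> nat) \<Rightarrow> real \<Rightarrow> real \<Rightarrow> bool" where
  "asymptotically_uniform_grid x d a b \<longleftrightarrow>
     filterlim d at_top sequentially \<and>
     (\<lambda>n. Max {\<bar>x n i - (a + real i * (b - a) / real (d n))\<bar> | i. i \<in> {1..d n}})
        \<longlonglongrightarrow> 0"

definition has_asymptotic_distribution ::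
    "(nat \<Rightarrow> nat \<Rightarrow> real) \<Rightarrow> (nat \<Rightarrow> nat) \<Rightarrow> (real \<Rightarrow> real) \<Rightarrow> real \<Rightarrow> real \<Rightarrow> bool" where
  "has_asymptotic_distribution lam d f a b \<longleftrightarrow>
     filterlim d at_top sequentially \<and>
     (\<forall>F :: complex \<Rightarrow> complex. continuous_on UNIV F \<and> bounded {z. F z \<noteq> 0} \<longrightarrow>
        (\<lambda>n. (\<Sum>i=1..d n. F (complex_of_real (lam n i))) / of_nat (d n))
          \<longlonglongrightarrow> integral\<^sup>L (lebesgue_on {a..b}) (\<lambda>x. F (complex_of_real (f x)))
                / complex_of_real (b - a))"

end

theory Submission
  imports Defs
begin

definition trap :: "real \<Rightarrow> real \<Rightarrow> real \<Rightarrow> real \<Rightarrow> real" where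
  "trap \<alpha> \<beta> w v = max 0 (min 1 (min ((v - \<alpha>) / w + 1) ((\<beta> - v) / w + 1)))"

lemma trap_cont: "continuous_on UNIV (trap \<alpha> \<beta> w)"
  by (cases "w = 0") (auto simp: trap_def intro!: continuous_intros)

lemma trap_isCont: "isCont (trap \<alpha> \<beta> w) v"
  using trap_cont by (simp add: continuous_on_eq_continuous_at)

lemma trap_ge0: "0 \<le> trap \<alpha> \<beta> w v" and trap_le1: "trap \<alpha> \<beta> w v \<le> 1"
  unfolding trap_def by (simp_all add: max_def min_def)

lemma trap_one:
  assumes w: "w > 0" and v1: "\<alpha> \<le> v" and v2: "v \<le> \<beta>"
  shows "trap \<alpha> \<beta> w v = 1"
proof -
  have A: "1 \<le> (v - \<alpha>) / w + 1" using w v1 by simp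
  have B: "1 \<le> (\<beta> - v) / w + 1" using w v2 by simp
  have "min ((v - \<alpha>) / w + 1) ((\<beta> - v) / w + 1) \<ge> 1" using A B by simp
  then have "min 1 (min ((v - \<alpha>) / w + 1) ((\<beta> - v) / w + 1)) = 1" by (simp add: min_def)
  then show ?thesis unfolding trap_def by simp
qed

lemma trap_zero_right:
  assumes w: "w > 0" and v: "\<beta> + w \<le> v"
  shows "trap \<alpha> \<beta> w v = 0"
proof -
  have "(\<beta> - v) / w \<le> -1" using w v by (simp add: divide_le_eq)
  then have "min 1 (min ((v - \<alpha>) / w + 1) ((\<beta> - v) / w + 1)) \<le> 0" by linarith
  then show ?thesis unfolding trap_def by (rule max_absorb1)
qed

lemma trap_zero_left:
  assumes w: "w > 0" and v: "v \<le> \<alpha> - w"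
  shows "trap \<alpha> \<beta> w v = 0"
proof -
  have "(v - \<alpha>) / w \<le> -1" using w v by (simp add: divide_le_eq)
  then have "min 1 (min ((v - \<alpha>) / w + 1) ((\<beta> - v) / w + 1)) \<le> 0" by linarith
  then show ?thesis unfolding trap_def by (rule max_absorb1)
qed

lemma trap_mono:
  assumes w: "w > 0" and b: "\<beta>1 \<le> \<beta>2"
  shows "trap \<alpha> \<beta>1 w v \<le> trap \<alpha> \<beta>2 w v"
proof -
  have "(\<beta>1 - v) / w \<le> (\<beta>2 - v) / w" using w b by (simp add: divide_right_mono)
  then show ?thesis unfolding trap_def by (intro max.mono min.mono order_refl) simp_all
qed

lemma trap_supp:
  assumes w: "w > 0"
  shows "{v. trap \<alpha> \<beta> w v \<noteq> 0} \<subseteq> {\<alpha> - w .. \<beta> + w}"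
proof
  fix v assume "v \<in> {v. trap \<alpha> \<beta> w v \<noteq> 0}"
  then have nz: "trap \<alpha> \<beta> w v \<noteq> 0" by simp
  have l: "\<alpha> - w \<le> v"
  proof (rule ccontr)
    assume "\<not> ?thesis"
    then have "v \<le> \<alpha> - w" by simp
    then have "trap \<alpha> \<beta> w v = 0" by (rule trap_zero_left[OF w])
    with nz show False by simp
  qed
  have r: "v \<le> \<beta> + w"
  proof (rule ccontr)
    assume "\<not> ?thesis"
    then have "\<beta> + w \<le> v" by simp
    then have "trap \<alpha> \<beta> w v = 0" by (rule trap_zero_right[OF w])
    with nz show False by simp
  qed
  show "v \<in> {\<alpha> - w .. \<beta> + w}" using l r by simp
qed

lemma one_side:
  fixes L :: "(real \<Rightarrow> real) \<Rightarrow> real" and y z :: "nat \<Rightarrow> nat \<Rightarrow> real" and p q :: "nat \<Rightarrow> nat \<Rightarrow> nat"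
  assumes dpos: "eventually (\<lambda>n. 0 < d n) sequentially"
    and convy: "\<And>\<alpha> \<beta> w. w > 0 \<Longrightarrow> (\<lambda>n. (\<Sum>i=1..d n. trap \<alpha> \<beta> w (y n i)) / real (d n)) \<longlonglongrightarrow> L (trap \<alpha> \<beta> w)"
    and convz: "\<And>\<alpha> \<beta> w. w > 0 \<Longrightarrow> (\<lambda>n. (\<Sum>i=1..d n. trap \<alpha> \<beta> w (z n i)) / real (d n)) \<longlonglongrightarrow> L (trap \<alpha> \<beta> w)"
    and gap: "\<And>\<alpha> \<beta>1 \<beta>2 w. w > 0 \<Longrightarrow> \<alpha> \<le> m \<Longrightarrow> m \<le> \<beta>1 + w \<Longrightarrow> \<beta>1 + w < \<beta>2 \<Longrightarrow> \<beta>2 \<le> M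
              \<Longrightarrow> L (trap \<alpha> \<beta>1 w) < L (trap \<alpha> \<beta>2 w)"
    and rangey: "\<And>e. e > 0 \<Longrightarrow> eventually (\<lambda>n. \<forall>i\<in>{1..d n}. m - e \<le> y n i \<and> y n i \<le> M + e) sequentially"
    and rangez: "\<And>e. e > 0 \<Longrightarrow> eventually (\<lambda>n. \<forall>i\<in>{1..d n}. m - e \<le> z n i \<and> z n i \<le> M + e) sequentially"
    and p: "\<And>n. p n permutes {1..d n}" and q: "\<And>n. q n permutes {1..d n}"
    and sorty: "\<And>n i j. 1 \<le> i \<Longrightarrow> i \<le> j \<Longrightarrow> j \<le> d n \<Longrightarrow> y n (p n i) \<le> y n (p n j)"
    and sortz: "\<And>n i j. 1 \<le> i \<Longrightarrow> i \<le> j \<Longrightarrow> j \<le> d n \<Longrightarrow> z n (q n i) \<le> z n (q n j)"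
    and \<delta>: "\<delta> > 0"
  shows "eventually (\<lambda>n. \<forall>i\<in>{1..d n}. y n (p n i) \<le> z n (q n i) + \<delta>) sequentially"
proof (cases "M - m < \<delta> / 2")
  case True
  have "eventually (\<lambda>n. (\<forall>i\<in>{1..d n}. m - \<delta>/4 \<le> y n i \<and> y n i \<le> M + \<delta>/4) \<and>
       (\<forall>i\<in>{1..d n}. m - \<delta>/4 \<le> z n i \<and> z n i \<le> M + \<delta>/4)) sequentially"
    using \<delta> by (intro eventually_conj rangey rangez) auto
  then show ?thesis
  proof (rule eventually_mono, intro ballI)
    fix n i assume H: "(\<forall>i\<in>{1..d n}. m - \<delta>/4 \<le> y n i \<and> y n i \<le> M + \<delta>/4) \<and>
       (\<forall>i\<in>{1..d n}. m - \<delta>/4 \<le> z n i \<and> z n i \<le> M + \<delta>/4)" and i: "i \<in> {1..d n}"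
    have pin: "p n i \<in> {1..d n}" using permutes_in_image[OF p[of n], of i] i by simp
    have qin: "q n i \<in> {1..d n}" using permutes_in_image[OF q[of n], of i] i by simp
    have y1: "y n (p n i) \<le> M + \<delta>/4" using H pin by blast
    have z1: "m - \<delta>/4 \<le> z n (q n i)" using H qin by blast
    show "y n (p n i) \<le> z n (q n i) + \<delta>" using y1 z1 True by linarith
  qed
next
  case False
  define K :: nat where "K = nat \<lceil>4 * (M - m) / \<delta>\<rceil> + 1"
  have Kpos: "K > 0" unfolding K_def by simp
  have mM: "m < M" using False \<delta> by linarith
  have "4 * (M - m) / \<delta> < K" unfolding K_def by linarith
  then have "4 * (M - m) < K * \<delta>" using \<delta> by (simp add: field_simps)
  define h where "h = (M - m) / K"
  have hpos: "h > 0" unfolding h_def using mM Kpos by simp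
  have h\<delta>: "h < \<delta> / 4" unfolding h_def using \<open>4 * (M - m) < K * \<delta>\<close> Kpos by (simp add: field_simps)
  have Kh: "m + K * h = M" unfolding h_def using Kpos by simp
  define t where "t k = m + real k * h" for k :: nat
  define \<phi> where "\<phi> k = trap (m - 1) (t k) (h/3)" for k
  define \<psi> where "\<psi> k = trap (m - 1) (t k + 2*h/3) (h/3)" for k
  have gapk: "L (\<phi> k) < L (\<psi> k)" if "k < K" for k
  proof -
    have "real k + 1 \<le> real K" using that by simp
    then have "(real k + 1) * h \<le> real K * h" using hpos by (intro mult_right_mono) auto
    then have "t k + h \<le> M" unfolding t_def using Kh by (simp add: distrib_right)
    then have tkM: "t k + h \<le> M" .
    have tk0: "m \<le> t k" unfolding t_def using hpos by simp
    show ?thesis unfolding \<phi>_def \<psi>_def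
    proof (rule gap)
      show "0 < h/3" using hpos by simp
      show "m - 1 \<le> m" by simp
      show "m \<le> t k + h/3" using tk0 hpos by simp
      show "t k + h/3 < t k + 2*h/3" using hpos by simp
      show "t k + 2*h/3 \<le> M" using tkM hpos by simp
    qed
  qed
  define g where "g = Min ((\<lambda>k. L (\<psi> k) - L (\<phi> k)) ` {..<K})"
  have gpos: "g > 0" unfolding g_def using gapk Kpos by (subst Min_gr_iff) auto
  have gle: "g \<le> L (\<psi> k) - L (\<phi> k)" if "k < K" for k
    unfolding g_def using that by (intro Min_le) auto
  have ev1: "eventually (\<lambda>n. \<forall>k\<in>{..<K}. (\<Sum>i=1..d n. \<phi> k (z n i)) / real (d n) < L (\<phi> k) + g/2 \<and>
       L (\<psi> k) - g/2 < (\<Sum>i=1..d n. \<psi> k (y n i)) / real (d n)) sequentially"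
  proof (rule eventually_ball_finite, simp, intro ballI eventually_conj)
    fix k
    show "\<forall>\<^sub>F n in sequentially. (\<Sum>i = 1..d n. \<phi> k (z n i)) / real (d n) < L (\<phi> k) + g / 2"
      unfolding \<phi>_def by (rule order_tendstoD(2)[OF convz]) (use hpos gpos in auto)
    show "\<forall>\<^sub>F n in sequentially. L (\<psi> k) - g / 2 < (\<Sum>i = 1..d n. \<psi> k (y n i)) / real (d n)"
      unfolding \<psi>_def by (rule order_tendstoD(1)[OF convy]) (use hpos gpos in auto)
  qed
  define e where "e = min 1 (\<delta>/4)"
  have epos: "e > 0" unfolding e_def using \<delta> by simp
  have "eventually (\<lambda>n. (\<forall>k\<in>{..<K}. (\<Sum>i=1..d n. \<phi> k (z n i)) / real (d n) < L (\<phi> k) + g/2 \<and>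
       L (\<psi> k) - g/2 < (\<Sum>i=1..d n. \<psi> k (y n i)) / real (d n)) \<and> 0 < d n \<and>
       (\<forall>i\<in>{1..d n}. m - e \<le> y n i \<and> y n i \<le> M + e) \<and>
       (\<forall>i\<in>{1..d n}. m - e \<le> z n i \<and> z n i \<le> M + e)) sequentially"
    by (intro eventually_conj ev1 dpos rangey[OF epos] rangez[OF epos])
  then show ?thesis
  proof (rule eventually_mono, intro ballI)
    fix n i
    assume H: "(\<forall>k\<in>{..<K}. (\<Sum>i=1..d n. \<phi> k (z n i)) / real (d n) < L (\<phi> k) + g/2 \<and>
       L (\<psi> k) - g/2 < (\<Sum>i=1..d n. \<psi> k (y n i)) / real (d n)) \<and> 0 < d n \<and>
       (\<forall>i\<in>{1..d n}. m - e \<le> y n i \<and> y n i \<le> M + e) \<and>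
       (\<forall>i\<in>{1..d n}. m - e \<le> z n i \<and> z n i \<le> M + e)"
      and i: "i \<in> {1..d n}"
    have Hk: "\<forall>k\<in>{..<K}. (\<Sum>i=1..d n. \<phi> k (z n i)) / real (d n) < L (\<phi> k) + g/2 \<and>
       L (\<psi> k) - g/2 < (\<Sum>i=1..d n. \<psi> k (y n i)) / real (d n)" using H by (rule conjunct1)
    have Hd: "0 < d n" using H by (rule conjunct1[OF conjunct2])
    have Hy: "\<forall>i\<in>{1..d n}. m - e \<le> y n i \<and> y n i \<le> M + e" using H by (rule conjunct1[OF conjunct2[OF conjunct2]])
    have Hz: "\<forall>i\<in>{1..d n}. m - e \<le> z n i \<and> z n i \<le> M + e" using H by (rule conjunct2[OF conjunct2[OF conjunct2]])
    show "y n (p n i) \<le> z n (q n i) + \<delta>"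
    proof (rule ccontr)
      assume C: "\<not> ?thesis"
      define c where "c = z n (q n i)"
      define c' where "c' = y n (p n i)"
      have pin: "p n j \<in> {1..d n}" if "j \<in> {1..d n}" for j using that permutes_in_image[OF p[of n], of j] by simp
      have qin: "q n j \<in> {1..d n}" if "j \<in> {1..d n}" for j using that permutes_in_image[OF q[of n], of j] by simp
      have cc': "c + \<delta> < c'" using C unfolding c_def c'_def by simp
      have c_ge: "m - e \<le> c" and c'_le: "c' \<le> M + e" using Hz[rule_format, OF qin[OF i]] Hy[rule_format, OF pin[OF i]] unfolding c_def c'_def by auto
      have e4: "e \<le> \<delta>/4" "e \<le> 1" unfolding e_def by auto
      define c0 where "c0 = max c m"
      define k where "k = nat \<lceil>(c0 - m) / h\<rceil>"
      have c0m: "c0 \<ge> m" unfolding c0_def by simp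
      have "real k = of_int \<lceil>(c0 - m) / h\<rceil>" unfolding k_def using c0m hpos by simp
      then have k1: "(c0 - m)/h \<le> real k" and k2: "real k < (c0 - m)/h + 1" by linarith+
      have tk1: "c0 \<le> t k" using k1 hpos unfolding t_def by (simp add: field_simps)
      have tk2: "t k < c0 + h" using k2 hpos unfolding t_def by (simp add: field_simps)
      have c0b: "c0 + \<delta>/2 < c'" and c0M: "c0 + \<delta>/2 \<le> M"
        using cc' c_ge c'_le e4 False \<delta> unfolding c0_def by (auto simp: max_def)
      have tkh: "t k + h < c'" using tk2 c0b h\<delta> by linarith
      have "t k + h < M" using tk2 c0M h\<delta> by linarith
      then have "real k * h + h < real K * h" using Kh unfolding t_def by linarith
      then have "(real k + 1) * h < real K * h" by (simp add: distrib_right)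
      then have "real k + 1 < real K" by (rule mult_right_less_imp_less) (use hpos in simp)
      then have kK: "k \<in> {..<K}" by simp
      have lo: "(\<Sum>j=1..d n. (if j \<le> i then 1 else 0)) \<le> (\<Sum>j=1..d n. \<phi> k (z n (q n j)))"
      proof (rule sum_mono)
        fix j assume j: "j \<in> {1..d n}"
        show "(if j \<le> i then 1 else 0) \<le> \<phi> k (z n (q n j))"
        proof (cases "j \<le> i")
          case True
          have "z n (q n j) \<le> c" unfolding c_def using sortz[of j i n] True j i by auto
          moreover have "m - 1 \<le> z n (q n j)" using Hz[rule_format, OF qin[OF j]] e4 by linarith
          ultimately have "\<phi> k (z n (q n j)) = 1" unfolding \<phi>_def
            using tk1 hpos by (intro trap_one) (auto simp: c0_def)
          then show ?thesis using True by simp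
        qed (simp add: \<phi>_def trap_ge0)
      qed
      have s1: "(\<Sum>j\<in>{1..d n}. if j \<le> i then 1 else 0::real) = (\<Sum>j\<in>{j\<in>{1..d n}. j \<le> i}. 1)"
        by (rule sum.inter_filter[symmetric]) simp
      have s2: "{j\<in>{1..d n}. j \<le> i} = {1..i}" using i by auto
      have cnt1: "(\<Sum>j\<in>{1..d n}. if j \<le> i then 1 else 0::real) = real i" using s1 s2 by simp
      have perm1: "(\<Sum>j\<in>{1..d n}. \<phi> k (z n (q n j))) = (\<Sum>j\<in>{1..d n}. \<phi> k (z n j))"
        using sum.permute[OF q[of n], of "\<lambda>j. \<phi> k (z n j)"] by (simp add: comp_def)
      have lo': "real i \<le> (\<Sum>j=1..d n. \<phi> k (z n j))" using lo cnt1 perm1 by linarith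
      have up: "(\<Sum>j=1..d n. \<psi> k (y n (p n j))) \<le> (\<Sum>j=1..d n. (if j < i then 1 else 0))"
      proof (rule sum_mono)
        fix j assume j: "j \<in> {1..d n}"
        show "\<psi> k (y n (p n j)) \<le> (if j < i then 1 else 0)"
        proof (cases "j < i")
          case False
          have "c' \<le> y n (p n j)" unfolding c'_def using sorty[of i j n] False j i by auto
          then have "\<psi> k (y n (p n j)) = 0" unfolding \<psi>_def
            using tkh hpos by (intro trap_zero_right) auto
          then show ?thesis by simp
        qed (simp add: \<psi>_def trap_le1)
      qed
      have s3: "(\<Sum>j\<in>{1..d n}. if j < i then 1 else 0::real) = (\<Sum>j\<in>{j\<in>{1..d n}. j < i}. 1)"
        by (rule sum.inter_filter[symmetric]) simp
      have s4: "{j\<in>{1..d n}. j < i} = {1..i-1}" using i by auto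
      have cnt2: "(\<Sum>j\<in>{1..d n}. if j < i then 1 else 0::real) = real i - 1" using s3 s4 i by (simp add: of_nat_diff)
      have perm2: "(\<Sum>j\<in>{1..d n}. \<psi> k (y n (p n j))) = (\<Sum>j\<in>{1..d n}. \<psi> k (y n j))"
        using sum.permute[OF p[of n], of "\<lambda>j. \<psi> k (y n j)"] by (simp add: comp_def)
      have up': "(\<Sum>j=1..d n. \<psi> k (y n j)) \<le> real i - 1" using up cnt2 perm2 by linarith
      have dn: "real (d n) > 0" using Hd by simp
      have h1: "(\<Sum>j=1..d n. \<phi> k (z n j)) / real (d n) < L (\<phi> k) + g/2" using Hk[rule_format, OF kK] by (rule conjunct1)
      have h2: "L (\<psi> k) - g/2 < (\<Sum>j=1..d n. \<psi> k (y n j)) / real (d n)" using Hk[rule_format, OF kK] by (rule conjunct2)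
      have h3: "g \<le> L (\<psi> k) - L (\<phi> k)" using gle kK by simp
      have A: "(\<Sum>j=1..d n. \<phi> k (z n j)) / real (d n) < (\<Sum>j=1..d n. \<psi> k (y n j)) / real (d n)"
        using h1 h2 h3 by linarith
      then have "(\<Sum>j=1..d n. \<phi> k (z n j)) < (\<Sum>j=1..d n. \<psi> k (y n j))"
        using dn by (simp add: divide_less_cancel)
      then show False using lo' up' by linarith
    qed
  qed
qed

definition Uenv :: "(real \<Rightarrow> real) \<Rightarrow> real \<Rightarrow> real \<Rightarrow> real \<Rightarrow> real \<Rightarrow> real" where
  "Uenv g a b r s = Sup {g v | v. v \<in> {a..b} \<and> \<bar>v - s\<bar> < r}"

context
  fixes g :: "real \<Rightarrow> real" and a b B :: real
  assumes gB: "\<And>t. t \<in> {a..b} \<Longrightarrow> \<bar>g t\<bar> \<le> B"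
begin

lemma Uenv_bdd: "bdd_above {g v | v. v \<in> {a..b} \<and> \<bar>v - s\<bar> < r}"
  using gB by (auto intro!: bdd_aboveI[where M = B] simp: abs_le_iff)

lemma Uenv_ge: "v \<in> {a..b} \<Longrightarrow> \<bar>v - s\<bar> < r \<Longrightarrow> g v \<le> Uenv g a b r s"
  unfolding Uenv_def by (rule cSup_upper[OF _ Uenv_bdd]) auto

lemma Uenv_le: "s \<in> {a..b} \<Longrightarrow> r > 0 \<Longrightarrow> Uenv g a b r s \<le> B"
  unfolding Uenv_def using gB by (intro cSup_least) (force, auto simp: abs_le_iff)

lemma Uenv_geB: "s \<in> {a..b} \<Longrightarrow> r > 0 \<Longrightarrow> - B \<le> Uenv g a b r s"
  using Uenv_ge[of s s r] gB[of s] by auto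

lemma Uenv_abs: "s \<in> {a..b} \<Longrightarrow> r > 0 \<Longrightarrow> \<bar>Uenv g a b r s\<bar> \<le> B"
  unfolding abs_le_iff using Uenv_le[of s r] Uenv_geB[of s r] by linarith

lemma Uenv_mono: "s \<in> {a..b} \<Longrightarrow> 0 < r1 \<Longrightarrow> r1 \<le> r2 \<Longrightarrow> Uenv g a b r1 s \<le> Uenv g a b r2 s"
  unfolding Uenv_def by (rule cSup_subset_mono) (force, rule Uenv_bdd, auto)

lemma Uenv_meas: "r > 0 \<Longrightarrow> Uenv g a b r \<in> borel_measurable (lebesgue_on {a..b})"
proof (subst borel_measurable_iff_greater, intro allI)
  fix c :: real assume r: "r > 0"
  define Ob where "Ob = (\<Union>v\<in>{v\<in>{a..b}. c < g v}. ball v r)"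
  have "{s \<in> space (lebesgue_on {a..b}). c < Uenv g a b r s} = {a..b} \<inter> Ob"
  proof safe
    fix s assume s: "s \<in> space (lebesgue_on {a..b})" "c < Uenv g a b r s"
    then have s': "s \<in> {a..b}" by simp
    have "\<exists>x\<in>{g v | v. v \<in> {a..b} \<and> \<bar>v - s\<bar> < r}. c < x"
      using s(2) unfolding Uenv_def
      by (subst less_cSup_iff[symmetric]) (use s' r Uenv_bdd in auto)
    then show "s \<in> Ob" unfolding Ob_def by (force simp: dist_real_def abs_minus_commute)
  next
    fix s assume "s \<in> space (lebesgue_on {a..b})" then show "s \<in> {a..b}" by simp
  next
    fix s assume s: "s \<in> {a..b}" "s \<in> Ob"
    then obtain v where v: "v \<in> {a..b}" "c < g v" "dist v s < r" unfolding Ob_def by (auto simp: dist_commute)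
    show "c < Uenv g a b r s" using Uenv_ge[of v s r] v by (simp add: dist_real_def)
    show "s \<in> space (lebesgue_on {a..b})" using s by simp
  qed
  moreover have "open Ob" unfolding Ob_def by auto
  then have "{a..b} \<inter> Ob \<in> sets lebesgue" by (intro sets.Int) (auto intro: borel_open)
  ultimately show "{s \<in> space (lebesgue_on {a..b}). c < Uenv g a b r s} \<in> sets (lebesgue_on {a..b})"
    by (simp add: sets_restrict_space_iff)
qed

lemma Uenv_lim:
  assumes t: "t \<in> {a..b}" and c: "continuous (at t within {a..b}) g"
  shows "(\<lambda>j. Uenv g a b (1 / Suc j) t) \<longlonglongrightarrow> g t"
proof (rule LIMSEQ_I)
  fix e :: real assume e: "e > 0"
  obtain \<delta> where \<delta>: "\<delta> > 0" "\<And>v. v \<in> {a..b} \<Longrightarrow> dist v t < \<delta> \<Longrightarrow> dist (g v) (g t) < e/2"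
    using c e unfolding continuous_within_eps_delta by (meson half_gt_zero)
  obtain N :: nat where N: "1 / Suc N < \<delta>" using \<delta>(1)
    by (metis inverse_eq_divide nat_approx_posE)
  show "\<exists>N. \<forall>j\<ge>N. norm (Uenv g a b (1 / Suc j) t - g t) < e"
  proof (intro exI allI impI)
    fix j assume j: "j \<ge> N"
    have rj: "1 / real (Suc j) < \<delta>"
      using N j by (smt (verit) frac_le of_nat_0_less_iff of_nat_mono zero_less_Suc Suc_le_mono)
    have lo: "g t \<le> Uenv g a b (1 / Suc j) t" using Uenv_ge[of t t] t by simp
    have hi: "Uenv g a b (1 / Suc j) t \<le> g t + e/2"
      unfolding Uenv_def
    proof (rule cSup_least)
      show "{g v |v. v \<in> {a..b} \<and> \<bar>v - t\<bar> < 1 / real (Suc j)} \<noteq> {}" using t by force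
    next
      fix x assume "x \<in> {g v |v. v \<in> {a..b} \<and> \<bar>v - t\<bar> < 1 / real (Suc j)}"
      then obtain v where v: "x = g v" "v \<in> {a..b}" "\<bar>v - t\<bar> < 1 / real (Suc j)" by auto
      then have "dist (g v) (g t) < e/2" using \<delta>(2)[of v] rj by (simp add: dist_real_def)
      then have "g v - g t < e/2" unfolding dist_real_def using abs_ge_self[of "g v - g t"] by linarith
      then show "x \<le> g t + e/2" using v by simp
    qed
    show "norm (Uenv g a b (1 / Suc j) t - g t) < e" using lo hi e by simp
  qed
qed

lemma g_meas:
  assumes ab: "a < b"
    and gc: "AE t in lebesgue. t \<in> {a..b} \<longrightarrow> continuous (at t within {a..b}) g"
  shows "g \<in> borel_measurable (lebesgue_on {a..b})"
proof -
  define u where "u j x = indicator {a..b} x *\<^sub>R Uenv g a b (1 / Suc j) x" for j x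
  have um: "u j \<in> borel_measurable lebesgue" for j
    unfolding u_def using Uenv_meas[of "1 / Suc j"]
    by (subst borel_measurable_restrict_space_iff[symmetric]) auto
  have Gm: "(\<lambda>x. lim (\<lambda>j. u j x)) \<in> borel_measurable lebesgue"
    by (rule borel_measurable_lim_metric[OF um])
  have "AE x in lebesgue. lim (\<lambda>j. u j x) = indicator {a..b} x *\<^sub>R g x"
    using gc
  proof (rule eventually_mono)
    fix x assume H: "x \<in> {a..b} \<longrightarrow> continuous (at x within {a..b}) g"
    show "lim (\<lambda>j. u j x) = indicator {a..b} x *\<^sub>R g x"
    proof (cases "x \<in> {a..b}")
      case True
      then show ?thesis unfolding u_def using Uenv_lim[of x] H by (simp add: limI)
    next
      case False
      then show ?thesis unfolding u_def by simp
    qed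
  qed
  then have "(\<lambda>x. indicator {a..b} x *\<^sub>R g x) \<in> borel_measurable lebesgue"
    by (rule borel_measurable_AE[OF Gm])
  then show ?thesis
    by (subst borel_measurable_restrict_space_iff) auto
qed

end

lemma step_integral_le:
  fixes c :: "nat \<Rightarrow> real" and u :: "real \<Rightarrow> real" and D :: nat
  assumes ab: "a < b" and D: "D > 0" and ui: "integrable (lebesgue_on {a..b}) u"
    and cu: "\<And>i s. i \<in> {1..D} \<Longrightarrow> s \<in> {a..b} \<Longrightarrow> a + (real i - 1) * (b - a) / D < s \<Longrightarrow>
               s \<le> a + real i * (b - a) / D \<Longrightarrow> c i \<le> u s"
  shows "(\<Sum>i=1..D. c i) * ((b - a) / D) \<le> integral\<^sup>L (lebesgue_on {a..b}) u"
proof -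
  define h where "h = (b - a) / D"
  have hpos: "h > 0" unfolding h_def using ab D by simp
  have Dh: "real D * h = b - a" unfolding h_def using D by simp
  define C where "C i = {a + (real i - 1) * h <.. a + real i * h}" for i :: nat
  have C_eq: "C i = {a + (real i - 1) * (b - a) / D <.. a + real i * (b - a) / D}" for i
    unfolding C_def h_def by simp
  have Csub: "C i \<subseteq> {a..b}" if "i \<in> {1..D}" for i
  proof -
    have "0 \<le> (real i - 1) * h" using that hpos by simp
    moreover have "real i * h \<le> real D * h" using that hpos by (intro mult_right_mono) auto
    ultimately show ?thesis unfolding C_def using Dh by auto
  qed
  let ?M = "lebesgue_on {a..b}"
  have fin: "finite_measure ?M" by (rule finite_measure_lebesgue_on) simp
  have Csets: "C i \<in> sets ?M" if "i \<in> {1..D}" for i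
    using Csub[OF that] by (simp add: sets_restrict_space_iff C_def)
  have Cmeas: "measure ?M (C i) = h" if "i \<in> {1..D}" for i
  proof -
    have "measure ?M (C i) = measure lebesgue (C i)"
      using Csub[OF that] by (subst measure_restrict_space) auto
    also have "\<dots> = measure lborel (C i)" unfolding C_def by (subst measure_completion) auto
    also have "\<dots> = h" unfolding C_def using hpos by (simp add: algebra_simps)
    finally show ?thesis .
  qed
  define S where "S s = (\<Sum>i\<in>{1..D}. c i * indicator (C i) s)" for s
  have Sint_i: "integrable ?M (\<lambda>s. c i * indicator (C i) s)" if "i \<in> {1..D}" for i
  proof -
    have "integrable ?M (indicator (C i) :: real \<Rightarrow> real)"
      using Csets[OF that] finite_measure.emeasure_finite[OF fin, of "C i"]
      by (intro integrable_real_indicator) (auto simp: less_top)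
    then show ?thesis by simp
  qed
  have Sint: "integrable ?M S" unfolding S_def by (rule Bochner_Integration.integrable_sum[where f="\<lambda>i s. c i * indicator (C i) s"]) (rule Sint_i)
  have "integral\<^sup>L ?M S = (\<Sum>i\<in>{1..D}. integral\<^sup>L ?M (\<lambda>s. c i * indicator (C i) s))"
    unfolding S_def using Sint_i by (intro Bochner_Integration.integral_sum) auto
  also have "\<dots> = (\<Sum>i\<in>{1..D}. c i * h)"
  proof (rule sum.cong)
    fix i assume i: "i \<in> {1..D}"
    have "C i \<inter> space ?M = C i" using Csub[OF i] by auto
    then show "integral\<^sup>L ?M (\<lambda>s. c i * indicator (C i) s) = c i * h"
      using Cmeas[OF i] by simp
  qed simp
  also have "\<dots> = (\<Sum>i=1..D. c i) * ((b - a) / D)" unfolding h_def by (simp only: sum_distrib_right)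
  finally have IS: "integral\<^sup>L ?M S = (\<Sum>i=1..D. c i) * ((b - a) / D)" .
  have "AE s in lebesgue. s \<noteq> a"
    using AE_lborel_singleton[of a] by (rule AE_completion)
  then have AEle: "AE s in ?M. S s \<le> u s"
  proof (subst AE_restrict_space_iff, simp, elim eventually_mono, intro impI)
    fix s assume sa: "s \<noteq> a" and s: "s \<in> {a..b}"
    define i0 where "i0 = nat \<lceil>(s - a) / h\<rceil>"
    have q1: "0 < (s - a) / h" using sa s hpos by simp
    have q2: "(s - a) / h \<le> real D" using s hpos Dh by (simp add: field_simps)
    have ci0: "\<lceil>(s - a) / h\<rceil> = int i0" unfolding i0_def using q1 by simp
    have i0D: "i0 \<in> {1..D}"
    proof -
      have "1 \<le> \<lceil>(s - a) / h\<rceil>" using q1 by (simp add: le_ceiling_iff)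
      moreover have "\<lceil>(s - a) / h\<rceil> \<le> int D" using q2 by (simp add: ceiling_le_iff)
      ultimately show ?thesis using ci0 by auto
    qed
    have memC: "s \<in> C i \<longleftrightarrow> i = i0" for i
    proof -
      have "s \<in> C i \<longleftrightarrow> real i - 1 < (s - a) / h \<and> (s - a) / h \<le> real i"
        unfolding C_def using hpos by (auto simp: field_simps)
      also have "\<dots> \<longleftrightarrow> \<lceil>(s - a) / h\<rceil> = int i" by (simp add: ceiling_eq_iff)
      also have "\<dots> \<longleftrightarrow> i = i0" using ci0 by auto
      finally show ?thesis .
    qed
    have "S s = (\<Sum>i\<in>{1..D}. if i = i0 then c i else 0)"
      unfolding S_def by (intro sum.cong) (auto simp: memC indicator_def)
    also have "\<dots> = c i0" using i0D by simp
    also have "\<dots> \<le> u s"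
    proof -
      have "s \<in> C i0" using memC by simp
      then show ?thesis using cu[OF i0D s] unfolding C_eq by simp
    qed
    finally show "S s \<le> u s" .
  qed
  have "integral\<^sup>L ?M S \<le> integral\<^sup>L ?M u" by (rule integral_mono_AE[OF Sint ui AEle])
  then show ?thesis using IS by simp
qed

lemma riemann_upper:
  fixes g :: "real \<Rightarrow> real" and x :: "nat \<Rightarrow> nat \<Rightarrow> real" and d :: "nat \<Rightarrow> nat"
  assumes ab: "a < b" and gB: "\<And>t. t \<in> {a..b} \<Longrightarrow> \<bar>g t\<bar> \<le> B"
    and gc: "AE t in lebesgue. t \<in> {a..b} \<longrightarrow> continuous (at t within {a..b}) g"
    and dlim: "filterlim d at_top sequentially"
    and xin: "\<And>n i. i \<in> {1..d n} \<Longrightarrow> x n i \<in> {a..b}"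
    and xdev: "\<And>\<eta>. \<eta> > 0 \<Longrightarrow> eventually (\<lambda>n. \<forall>i\<in>{1..d n}. \<bar>x n i - (a + real i * (b - a) / real (d n))\<bar> < \<eta>) sequentially"
    and e: "e > 0"
  shows "eventually (\<lambda>n. (\<Sum>i=1..d n. g (x n i)) / real (d n) \<le> integral\<^sup>L (lebesgue_on {a..b}) g / (b - a) + e) sequentially"
proof -
  let ?M = "lebesgue_on {a..b}"
  let ?U = "\<lambda>j. Uenv g a b (1 / Suc j)"
  have fin: "finite_measure ?M" by (rule finite_measure_lebesgue_on) simp
  have gm: "g \<in> borel_measurable ?M" by (rule g_meas[where g=g and a=a and b=b and B=B, OF gB ab gc])
  have Um: "?U j \<in> borel_measurable ?M" for j using Uenv_meas[where g=g and a=a and b=b and B=B, OF gB, of "1 / Suc j"] by simp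
  have bound: "AE s in ?M. norm (?U j s) \<le> B" for j
    by (rule AE_I2) (use Uenv_abs[where g=g and a=a and b=b and B=B, OF gB] in simp)
  have lim: "AE s in ?M. (\<lambda>j. ?U j s) \<longlonglongrightarrow> g s"
    apply (subst AE_restrict_space_iff, simp)
    using gc by (rule eventually_mono) (use Uenv_lim[where g=g and a=a and b=b and B=B, OF gB] in auto)
  have Bint: "integrable ?M (\<lambda>_. B)" using fin by (simp add: finite_measure.integrable_const)
  have DCT: "(\<lambda>j. integral\<^sup>L ?M (?U j)) \<longlonglongrightarrow> integral\<^sup>L ?M g"
    by (rule integral_dominated_convergence[OF gm Um Bint lim bound])
  have Uint: "integrable ?M (?U j)" for j
    by (rule integrable_dominated_convergence2[OF gm Um Bint lim bound])
  have "eventually (\<lambda>j. integral\<^sup>L ?M (?U j) < integral\<^sup>L ?M g + e * (b - a)) sequentially"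
    by (rule order_tendstoD(2)[OF DCT]) (use e ab in simp)
  then obtain j where j: "integral\<^sup>L ?M (?U j) < integral\<^sup>L ?M g + e * (b - a)"
    by (auto simp: eventually_sequentially)
  define r :: real where "r = 1 / Suc j"
  have rpos: "r > 0" unfolding r_def by simp
  define N :: nat where "N = nat \<lceil>2 * (b - a) / r\<rceil> + 1"
  have "eventually (\<lambda>n. N \<le> d n) sequentially" using dlim by (simp add: filterlim_at_top)
  moreover have "eventually (\<lambda>n. \<forall>i\<in>{1..d n}. \<bar>x n i - (a + real i * (b - a) / real (d n))\<bar> < r/2) sequentially"
    using xdev[of "r/2"] rpos by simp
  ultimately show ?thesis
  proof eventually_elim
    case (elim n)
    have NN: "2 * (b - a) / r < real N" unfolding N_def by linarith
    then have dn: "2 * (b - a) / r < real (d n)" using elim(1) by linarith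
    have Dpos: "d n > 0" using dn ab rpos
      by (metis divide_pos_pos gr0I less_numeral_extra(3) mult_pos_pos of_nat_0 zero_less_numeral diff_gt_0_iff_gt order_less_asym)
    have hr: "(b - a) / real (d n) < r / 2" using dn rpos ab Dpos by (simp add: field_simps)
    have key: "(\<Sum>i=1..d n. g (x n i)) * ((b - a) / d n) \<le> integral\<^sup>L ?M (?U j)"
    proof (rule step_integral_le[OF ab Dpos Uint])
      fix i s assume i: "i \<in> {1..d n}" and s: "s \<in> {a..b}"
        and s1: "a + (real i - 1) * (b - a) / real (d n) < s" and s2: "s \<le> a + real i * (b - a) / real (d n)"
      have "(real i - 1) * (b - a) / real (d n) = real i * (b - a) / real (d n) - (b - a) / real (d n)"
        by (simp add: left_diff_distrib diff_divide_distrib)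
      then have T1: "a + real i * (b - a) / real (d n) - (b - a) / real (d n) < s" using s1 by simp
      have "\<bar>s - (a + real i * (b - a) / real (d n))\<bar> < r / 2"
        unfolding abs_less_iff using T1 s2 hr by linarith
      moreover have "\<bar>x n i - (a + real i * (b - a) / real (d n))\<bar> < r / 2" using elim(2) i by blast
      ultimately have "\<bar>x n i - s\<bar> < r" unfolding abs_less_iff by linarith
      then show "g (x n i) \<le> ?U j s" using Uenv_ge[where g=g and a=a and b=b and B=B, OF gB xin[OF i]] unfolding r_def by simp
    qed
    have "(\<Sum>i=1..d n. g (x n i)) / real (d n) * (b - a) = (\<Sum>i=1..d n. g (x n i)) * ((b - a) / d n)"
      by simp
    also have "\<dots> < integral\<^sup>L ?M g + e * (b - a)" using key j by linarith
    also have "\<dots> = (integral\<^sup>L ?M g / (b - a) + e) * (b - a)" using ab by (simp add: field_simps)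
    finally have "(\<Sum>i=1..d n. g (x n i)) / real (d n) < integral\<^sup>L ?M g / (b - a) + e"
      by (rule mult_right_less_imp_less) (use ab in simp)
    then show ?case by simp
  qed
qed

lemma half_lemma1: "(A::real) \<le> I + (c - I) / 2 \<Longrightarrow> I < c \<Longrightarrow> A < c" by (simp add: field_simps)
lemma half_lemma2: "- (A::real) \<le> - I + (I - c) / 2 \<Longrightarrow> c < I \<Longrightarrow> c < A" by (simp add: field_simps)

lemma riemann_lim:
  fixes g :: "real \<Rightarrow> real" and x :: "nat \<Rightarrow> nat \<Rightarrow> real" and d :: "nat \<Rightarrow> nat"
  assumes ab: "a < b" and gB: "\<And>t. t \<in> {a..b} \<Longrightarrow> \<bar>g t\<bar> \<le> B"
    and gc: "AE t in lebesgue. t \<in> {a..b} \<longrightarrow> continuous (at t within {a..b}) g"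
    and dlim: "filterlim d at_top sequentially"
    and xin: "\<And>n i. i \<in> {1..d n} \<Longrightarrow> x n i \<in> {a..b}"
    and xdev: "\<And>\<eta>. \<eta> > 0 \<Longrightarrow> eventually (\<lambda>n. \<forall>i\<in>{1..d n}. \<bar>x n i - (a + real i * (b - a) / real (d n))\<bar> < \<eta>) sequentially"
  shows "(\<lambda>n. (\<Sum>i=1..d n. g (x n i)) / real (d n)) \<longlonglongrightarrow> integral\<^sup>L (lebesgue_on {a..b}) g / (b - a)"
proof -
  let ?I = "integral\<^sup>L (lebesgue_on {a..b}) g / (b - a)"
  have up: "eventually (\<lambda>n. (\<Sum>i=1..d n. g (x n i)) / real (d n) < c) sequentially" if c: "?I < c" for c
  proof -
    have "eventually (\<lambda>n. (\<Sum>i=1..d n. g (x n i)) / real (d n) \<le> ?I + (c - ?I) / 2) sequentially"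
      by (rule riemann_upper[where a=a and b=b and g=g and B=B and d=d and x=x, OF ab gB gc dlim xin xdev])
         (use c in auto)
    then show ?thesis
    proof eventually_elim
      case (elim n)
      then show ?case using c by (rule half_lemma1)
    qed
  qed
  have lo: "eventually (\<lambda>n. c < (\<Sum>i=1..d n. g (x n i)) / real (d n)) sequentially" if c: "c < ?I" for c
  proof -
    have gB': "\<And>t. t \<in> {a..b} \<Longrightarrow> \<bar>- g t\<bar> \<le> B" using gB by simp
    have gc': "AE t in lebesgue. t \<in> {a..b} \<longrightarrow> continuous (at t within {a..b}) (\<lambda>t. - g t)"
      using gc by (rule eventually_mono) (auto intro: continuous_minus)
    have "eventually (\<lambda>n. (\<Sum>i=1..d n. - g (x n i)) / real (d n) \<le>
            integral\<^sup>L (lebesgue_on {a..b}) (\<lambda>t. - g t) / (b - a) + (?I - c) / 2) sequentially"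
      by (rule riemann_upper[where a=a and b=b and g="\<lambda>t. - g t" and B=B and d=d and x=x, OF ab gB' gc' dlim xin xdev])
         (use c in auto)
    then show ?thesis
    proof eventually_elim
      case (elim n)
      have e1: "(\<Sum>i=1..d n. - g (x n i)) / real (d n) = - ((\<Sum>i=1..d n. g (x n i)) / real (d n))"
        by (simp add: sum_negf)
      have e2: "integral\<^sup>L (lebesgue_on {a..b}) (\<lambda>t. - g t) / (b - a) = - ?I" by simp
      show ?case using elim c unfolding e1 e2 by (rule half_lemma2)
    qed
  qed
  show ?thesis by (rule order_tendstoI) (erule lo, erule up)
qed

lemma two_side:
  fixes L :: "(real \<Rightarrow> real) \<Rightarrow> real" and y z :: "nat \<Rightarrow> nat \<Rightarrow> real" and p q :: "nat \<Rightarrow> nat \<Rightarrow> nat"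
  assumes dpos: "eventually (\<lambda>n. 0 < d n) sequentially"
    and convy: "\<And>\<alpha> \<beta> w. w > 0 \<Longrightarrow> (\<lambda>n. (\<Sum>i=1..d n. trap \<alpha> \<beta> w (y n i)) / real (d n)) \<longlonglongrightarrow> L (trap \<alpha> \<beta> w)"
    and convz: "\<And>\<alpha> \<beta> w. w > 0 \<Longrightarrow> (\<lambda>n. (\<Sum>i=1..d n. trap \<alpha> \<beta> w (z n i)) / real (d n)) \<longlonglongrightarrow> L (trap \<alpha> \<beta> w)"
    and gap: "\<And>\<alpha> \<beta>1 \<beta>2 w. w > 0 \<Longrightarrow> \<alpha> \<le> m \<Longrightarrow> m \<le> \<beta>1 + w \<Longrightarrow> \<beta>1 + w < \<beta>2 \<Longrightarrow> \<beta>2 \<le> M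
              \<Longrightarrow> L (trap \<alpha> \<beta>1 w) < L (trap \<alpha> \<beta>2 w)"
    and rangey: "\<And>e. e > 0 \<Longrightarrow> eventually (\<lambda>n. \<forall>i\<in>{1..d n}. m - e \<le> y n i \<and> y n i \<le> M + e) sequentially"
    and rangez: "\<And>e. e > 0 \<Longrightarrow> eventually (\<lambda>n. \<forall>i\<in>{1..d n}. m - e \<le> z n i \<and> z n i \<le> M + e) sequentially"
    and p: "\<And>n. p n permutes {1..d n}" and q: "\<And>n. q n permutes {1..d n}"
    and sorty: "\<And>n i j. 1 \<le> i \<Longrightarrow> i \<le> j \<Longrightarrow> j \<le> d n \<Longrightarrow> y n (p n i) \<le> y n (p n j)"
    and sortz: "\<And>n i j. 1 \<le> i \<Longrightarrow> i \<le> j \<Longrightarrow> j \<le> d n \<Longrightarrow> z n (q n i) \<le> z n (q n j)"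
  shows "(\<lambda>n. Max {\<bar>y n (p n i) - z n (q n i)\<bar> | i. i \<in> {1..d n}}) \<longlonglongrightarrow> 0"
proof (rule order_tendstoI)
  fix c :: real assume c: "c < 0"
  show "eventually (\<lambda>n. c < Max {\<bar>y n (p n i) - z n (q n i)\<bar> | i. i \<in> {1..d n}}) sequentially"
    using dpos
  proof eventually_elim
    case (elim n)
    have "\<bar>y n (p n 1) - z n (q n 1)\<bar> \<le> Max {\<bar>y n (p n i) - z n (q n i)\<bar> | i. i \<in> {1..d n}}"
      unfolding Setcompr_eq_image using elim by (intro Max_ge) auto
    then show ?case using c by linarith
  qed
next
  fix c :: real assume c: "c > 0"
  have A: "eventually (\<lambda>n. \<forall>i\<in>{1..d n}. y n (p n i) \<le> z n (q n i) + c/2) sequentially"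
    by (rule one_side[OF dpos convy convz gap rangey rangez p q sorty sortz]) (use c in auto)
  have B: "eventually (\<lambda>n. \<forall>i\<in>{1..d n}. z n (q n i) \<le> y n (p n i) + c/2) sequentially"
    by (rule one_side[OF dpos convz convy gap rangez rangey q p sortz sorty]) (use c in auto)
  show "eventually (\<lambda>n. Max {\<bar>y n (p n i) - z n (q n i)\<bar> | i. i \<in> {1..d n}} < c) sequentially"
    using A B dpos
  proof eventually_elim
    case (elim n)
    have "Max {\<bar>y n (p n i) - z n (q n i)\<bar> | i. i \<in> {1..d n}} \<le> c/2"
    proof -
      have "\<forall>i\<in>{1..d n}. \<bar>y n (p n i) - z n (q n i)\<bar> \<le> c/2"
      proof
        fix i assume i: "i \<in> {1..d n}"
        show "\<bar>y n (p n i) - z n (q n i)\<bar> \<le> c/2"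
          using elim(1)[rule_format, OF i] elim(2)[rule_format, OF i] unfolding abs_le_iff by linarith
      qed
      then show ?thesis unfolding Setcompr_eq_image using elim(3) by (subst Max_le_iff) auto
    qed
    then show ?case using c by linarith
  qed
qed

lemma sort_perm:
  fixes w :: "nat \<Rightarrow> real" and D :: nat
  shows "\<exists>p. p permutes {1..D} \<and> (\<forall>i j. 1 \<le> i \<and> i \<le> j \<and> j \<le> D \<longrightarrow> w (p i) \<le> w (p j))"
proof -
  define ys where "ys = map w [1..<D+1]"
  define xs where "xs = sort ys"
  have "mset xs = mset ys" unfolding xs_def by simp
  then obtain p0 where p0: "p0 permutes {..<length ys}" "permute_list p0 ys = xs"
    by (rule mset_eq_permutation)
  have ly: "length ys = D" unfolding ys_def by simp
  have ysn: "ys ! k = w (Suc k)" if "k < D" for k unfolding ys_def using that by (simp add: nth_upt del: upt_Suc)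
  have xsn: "xs ! k = w (Suc (p0 k))" if "k < D" for k
  proof -
    have "xs ! k = ys ! p0 k" using permute_list_nth[OF p0(1)] p0(2) that ly by auto
    moreover have "p0 k < D" using permutes_in_image[OF p0(1)] that ly by auto
    ultimately show ?thesis using ysn by simp
  qed
  have sx: "sorted xs" unfolding xs_def by simp
  have lx: "length xs = D" unfolding xs_def using ly by simp
  define p where "p i = (if i \<in> {1..D} then Suc (p0 (i - 1)) else i)" for i
  have p0in: "p0 k < D" if "k < D" for k using permutes_in_image[OF p0(1)] that ly by auto
  have inj0: "inj_on p0 {..<D}" using permutes_inj_on[OF p0(1)] ly by simp
  have "p permutes {1..D}"
  proof (rule bij_imp_permutes)
    have im: "p ` {1..D} \<subseteq> {1..D}" unfolding p_def using p0in by (auto simp: Suc_le_eq)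
    have inj: "inj_on p {1..D}"
    proof (rule inj_onI)
      fix i j assume i: "i \<in> {1..D}" and j: "j \<in> {1..D}" and e: "p i = p j"
      then have "p0 (i - 1) = p0 (j - 1)" unfolding p_def by simp
      then have "i - 1 = j - 1" using inj0 i j by (auto dest: inj_onD)
      then show "i = j" using i j by auto
    qed
    show "bij_betw p {1..D} {1..D}" unfolding bij_betw_def using endo_inj_surj[OF _ im inj] inj by simp
  next
    fix x assume "x \<notin> {1..D}" then show "p x = x" unfolding p_def by auto
  qed
  moreover have "w (p i) \<le> w (p j)" if "1 \<le> i" "i \<le> j" "j \<le> D" for i j
  proof -
    have "w (p i) = xs ! (i - 1)" using xsn[of "i-1"] that unfolding p_def by simp
    moreover have "w (p j) = xs ! (j - 1)" using xsn[of "j-1"] that unfolding p_def by simp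
    moreover have "xs ! (i - 1) \<le> xs ! (j - 1)" using sx lx that by (auto simp: sorted_iff_nth_mono)
    ultimately show ?thesis by simp
  qed
  ultimately show ?thesis by blast
qed

lemma finite_perm_image: "finite {g \<tau> | \<tau>. \<tau> permutes {1..(D::nat)}}"
proof -
  have "{g \<tau> | \<tau>. \<tau> permutes {1..D}} = g ` {\<tau>. \<tau> permutes {1..D}}" by blast
  then show ?thesis using finite_permutations[of "{1..D}"] by simp
qed

theorem corollary2p3:
  fixes f :: "real \<Rightarrow> real" and a b :: real
    and lam :: "nat \<Rightarrow> nat \<Rightarrow> real" and d :: "nat \<Rightarrow> nat"
    and eps :: "nat \<Rightarrow> real" and x :: "nat \<Rightarrow> nat \<Rightarrow> real"
  assumes ab: "a < b"
    and f_bdd: "bounded (f ` {a..b})"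
    and f_cont_ae: "AE t in lebesgue. t \<in> {a..b} \<longrightarrow> continuous (at t within {a..b}) f"
    and f_ER: "essential_range f a b = {Inf (f ` {a..b}) .. Sup (f ` {a..b})}"
    and d_lim: "filterlim d at_top sequentially"
    and distr: "has_asymptotic_distribution lam d f a b"
    and eps_lim: "eps \<longlonglongrightarrow> 0"
    and lam_in: "\<And>n i. i \<in> {1..d n} \<Longrightarrow>
        lam n i \<in> {Inf (f ` {a..b}) - eps n .. Sup (f ` {a..b}) + eps n}"
    and grid: "asymptotically_uniform_grid x d a b"
    and grid_in: "\<And>n i. i \<in> {1..d n} \<Longrightarrow> x n i \<in> {a..b}"
  shows "(\<forall>\<sigma> \<tau> :: nat \<Rightarrow> nat \<Rightarrow> nat.
            (\<forall>n. \<sigma> n permutes {1..d n} \<and> \<tau> n permutes {1..d n} \<and>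
                 (\<forall>i j. 1 \<le> i \<and> i \<le> j \<and> j \<le> d n \<longrightarrow>
                    f (x n (\<sigma> n i)) \<le> f (x n (\<sigma> n j)) \<and>
                    lam n (\<tau> n i) \<le> lam n (\<tau> n j)))
            \<longrightarrow> (\<lambda>n. Max {\<bar>f (x n (\<sigma> n i)) - lam n (\<tau> n i)\<bar> | i. i \<in> {1..d n}})
                  \<longlonglongrightarrow> 0)
       \<and> (\<lambda>n. Min {Max {\<bar>f (x n i) - lam n (\<tau> i)\<bar> | i. i \<in> {1..d n}} | \<tau>.
                      \<tau> permutes {1..d n}}) \<longlonglongrightarrow> 0"
proof -
  define m where "m = Inf (f ` {a..b})"
  define M where "M = Sup (f ` {a..b})"
  let ?M = "lebesgue_on {a..b}"
  obtain Bf where Bf0: "\<forall>y\<in>f ` {a..b}. norm y \<le> Bf" using f_bdd unfolding bounded_iff by blast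
  have Bf: "\<And>t. t \<in> {a..b} \<Longrightarrow> \<bar>f t\<bar> \<le> Bf" using Bf0 by auto
  have bddA: "bdd_above (f ` {a..b})" using f_bdd by (rule bounded_imp_bdd_above)
  have bddB: "bdd_below (f ` {a..b})" using f_bdd by (rule bounded_imp_bdd_below)
  have fmM: "m \<le> f t \<and> f t \<le> M" if "t \<in> {a..b}" for t
    unfolding m_def M_def using that bddA bddB by (auto intro: cInf_lower cSup_upper)
  have ER: "essential_range f a b = {m..M}" using f_ER by (simp add: m_def M_def)
  have fm: "f \<in> borel_measurable ?M"
    by (rule g_meas[where g=f and a=a and b=b and B=Bf, OF Bf ab f_cont_ae])
  have fin: "finite_measure ?M" by (rule finite_measure_lebesgue_on) simp
  define L where "L \<phi> = integral\<^sup>L ?M (\<lambda>t. \<phi> (f t)) / (b - a)" for \<phi> :: "real \<Rightarrow> real"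
  have dpos: "eventually (\<lambda>n. 0 < d n) sequentially"
  proof -
    have "eventually (\<lambda>n. 1 \<le> d n) sequentially" using d_lim by (simp add: filterlim_at_top)
    then show ?thesis by (rule eventually_mono) simp
  qed
  have xdev: "eventually (\<lambda>n. \<forall>i\<in>{1..d n}. \<bar>x n i - (a + real i * (b - a) / real (d n))\<bar> < \<eta>) sequentially"
    if \<eta>: "\<eta> > 0" for \<eta>
  proof -
    have lim: "(\<lambda>n. Max {\<bar>x n i - (a + real i * (b - a) / real (d n))\<bar> | i. i \<in> {1..d n}}) \<longlonglongrightarrow> 0"
      using grid unfolding asymptotically_uniform_grid_def by blast
    have "eventually (\<lambda>n. Max {\<bar>x n i - (a + real i * (b - a) / real (d n))\<bar> | i. i \<in> {1..d n}} < \<eta>) sequentially"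
      by (rule order_tendstoD(2)[OF lim \<eta>])
    then show ?thesis
    proof (rule eventually_mono, intro ballI)
      fix n i assume H: "Max {\<bar>x n i - (a + real i * (b - a) / real (d n))\<bar> | i. i \<in> {1..d n}} < \<eta>"
        and i: "i \<in> {1..d n}"
      have "\<bar>x n i - (a + real i * (b - a) / real (d n))\<bar> \<le> Max {\<bar>x n i - (a + real i * (b - a) / real (d n))\<bar> | i. i \<in> {1..d n}}"
        unfolding Setcompr_eq_image using i by (intro Max_ge) auto
      then show "\<bar>x n i - (a + real i * (b - a) / real (d n))\<bar> < \<eta>" using H by linarith
    qed
  qed
  have convx: "(\<lambda>n. (\<Sum>i=1..d n. trap \<alpha> \<beta> w (f (x n i))) / real (d n)) \<longlonglongrightarrow> L (trap \<alpha> \<beta> w)"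
    if w: "w > 0" for \<alpha> \<beta> w
  proof -
    have gB: "\<And>t. t \<in> {a..b} \<Longrightarrow> \<bar>trap \<alpha> \<beta> w (f t)\<bar> \<le> 1"
      using trap_ge0 trap_le1 by (simp add: abs_le_iff)
    have gc: "AE t in lebesgue. t \<in> {a..b} \<longrightarrow> continuous (at t within {a..b}) (\<lambda>t. trap \<alpha> \<beta> w (f t))"
      using f_cont_ae by (rule eventually_mono) (auto intro: continuous_within_compose3[OF trap_isCont])
    show ?thesis unfolding L_def
      by (rule riemann_lim[where a=a and b=b and g="\<lambda>t. trap \<alpha> \<beta> w (f t)" and B=1 and d=d and x=x,
            OF ab gB gc d_lim grid_in xdev])
  qed
  have convl: "(\<lambda>n. (\<Sum>i=1..d n. trap \<alpha> \<beta> w (lam n i)) / real (d n)) \<longlonglongrightarrow> L (trap \<alpha> \<beta> w)"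
    if w: "w > 0" for \<alpha> \<beta> w
  proof -
    define F where "F z = complex_of_real (trap \<alpha> \<beta> w (Re z) * max 0 (1 - \<bar>Im z\<bar>))" for z
    have c1: "continuous_on UNIV (\<lambda>z::complex. trap \<alpha> \<beta> w (Re z))"
      by (rule continuous_on_compose2[OF trap_cont]) (auto intro: continuous_intros)
    have Fc: "continuous_on UNIV F" unfolding F_def
      by (intro continuous_intros c1)
    have Fb: "bounded {z. F z \<noteq> 0}"
    proof (rule bounded_subset[OF bounded_cball[of 0 "\<bar>\<alpha> - w\<bar> + \<bar>\<beta> + w\<bar> + 1"]])
      show "{z. F z \<noteq> 0} \<subseteq> cball 0 (\<bar>\<alpha> - w\<bar> + \<bar>\<beta> + w\<bar> + 1)"
      proof
        fix z assume "z \<in> {z. F z \<noteq> 0}"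
        then have nz1: "trap \<alpha> \<beta> w (Re z) \<noteq> 0" and nz2: "max 0 (1 - \<bar>Im z\<bar>) \<noteq> 0"
          unfolding F_def by auto
        have "Re z \<in> {\<alpha> - w .. \<beta> + w}" using trap_supp[OF w] nz1 by blast
        then have r: "\<bar>Re z\<bar> \<le> \<bar>\<alpha> - w\<bar> + \<bar>\<beta> + w\<bar>" by auto
        have i: "\<bar>Im z\<bar> \<le> 1" using nz2 by (auto simp: max_def split: if_splits)
        have "cmod z \<le> \<bar>Re z\<bar> + \<bar>Im z\<bar>" by (rule cmod_le)
        then show "z \<in> cball 0 (\<bar>\<alpha> - w\<bar> + \<bar>\<beta> + w\<bar> + 1)" using r i by simp
      qed
    qed
    have Fo: "F (complex_of_real v) = complex_of_real (trap \<alpha> \<beta> w v)" for v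
      unfolding F_def by simp
    have lim: "(\<lambda>n. (\<Sum>i=1..d n. F (complex_of_real (lam n i))) / of_nat (d n))
          \<longlonglongrightarrow> integral\<^sup>L ?M (\<lambda>x. F (complex_of_real (f x))) / complex_of_real (b - a)"
      using distr Fc Fb unfolding has_asymptotic_distribution_def by blast
    have E1: "(\<Sum>i=1..d n. F (complex_of_real (lam n i))) / of_nat (d n) =
        complex_of_real ((\<Sum>i=1..d n. trap \<alpha> \<beta> w (lam n i)) / real (d n))" for n
      by (simp add: Fo)
    have E2: "integral\<^sup>L ?M (\<lambda>x. F (complex_of_real (f x))) / complex_of_real (b - a) =
        complex_of_real (L (trap \<alpha> \<beta> w))"
      by (simp add: Fo L_def)
    from lim have "(\<lambda>n. complex_of_real ((\<Sum>i=1..d n. trap \<alpha> \<beta> w (lam n i)) / real (d n)))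
          \<longlonglongrightarrow> complex_of_real (L (trap \<alpha> \<beta> w))" unfolding E1 E2 .
    then show ?thesis unfolding tendsto_of_real_iff .
  qed
  have gap: "L (trap \<alpha> \<beta>1 w) < L (trap \<alpha> \<beta>2 w)"
    if w: "w > 0" and h: "\<alpha> \<le> m" "m \<le> \<beta>1 + w" "\<beta>1 + w < \<beta>2" "\<beta>2 \<le> M" for \<alpha> \<beta>1 \<beta>2 w
  proof -
    define z0 where "z0 = (\<beta>1 + w + \<beta>2) / 2"
    define r0 where "r0 = (\<beta>2 - (\<beta>1 + w)) / 2"
    define A where "A = {t \<in> {a..b}. \<bar>f t - z0\<bar> < r0}"
    have r0: "r0 > 0" unfolding r0_def using h by simp
    have z0: "z0 \<in> essential_range f a b" unfolding ER z0_def using h by simp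
    have Apos: "emeasure lebesgue A > 0" using z0 r0 unfolding essential_range_def A_def by blast
    have Aeq: "A = f -` {z0 - r0 <..< z0 + r0} \<inter> space ?M" unfolding A_def by (auto simp: abs_less_iff)
    have Asets: "A \<in> sets ?M" unfolding Aeq by (rule measurable_sets[OF fm]) simp
    have Asub: "A \<subseteq> {a..b}" unfolding A_def by auto
    have "emeasure ?M A = emeasure lebesgue A" using Asub by (subst emeasure_restrict_space) auto
    then have "ennreal (measure ?M A) > 0" using Apos finite_measure.emeasure_eq_measure[OF fin, of A] by simp
    then have mA: "measure ?M A > 0" by simp
    have tm: "(\<lambda>t. trap \<alpha> \<beta>' w (f t)) \<in> borel_measurable ?M" for \<beta>'
      using measurable_compose[OF fm borel_measurable_continuous_onI[OF trap_cont]] by (simp add: comp_def)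
    have ti: "integrable ?M (\<lambda>t. trap \<alpha> \<beta>' w (f t))" for \<beta>'
      by (rule finite_measure.integrable_const_bound[OF fin, where B=1]) (auto simp: trap_ge0 trap_le1 tm)
    have Ai: "integrable ?M (indicator A :: real \<Rightarrow> real)"
      using Asets finite_measure.emeasure_finite[OF fin, of A]
      by (intro integrable_real_indicator) (auto simp: less_top)
    have "integral\<^sup>L ?M (indicator A :: real \<Rightarrow> real) \<le> integral\<^sup>L ?M (\<lambda>t. trap \<alpha> \<beta>2 w (f t) - trap \<alpha> \<beta>1 w (f t))"
    proof (rule Bochner_Integration.integral_mono[OF Ai])
      show "integrable ?M (\<lambda>t. trap \<alpha> \<beta>2 w (f t) - trap \<alpha> \<beta>1 w (f t))"
        by (intro Bochner_Integration.integrable_diff ti)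
    next
      fix t assume t: "t \<in> space ?M"
      show "indicator A t \<le> trap \<alpha> \<beta>2 w (f t) - trap \<alpha> \<beta>1 w (f t)"
      proof (cases "t \<in> A")
        case True
        then have a1: "\<bar>f t - z0\<bar> < r0" unfolding A_def by simp
        have zr: "z0 - r0 = \<beta>1 + w" "z0 + r0 = \<beta>2" unfolding z0_def r0_def by (simp_all add: field_simps)
        have ft: "\<beta>1 + w < f t" "f t < \<beta>2" using a1 zr unfolding abs_less_iff by linarith+
        have "trap \<alpha> \<beta>2 w (f t) = 1" using w h ft by (intro trap_one) auto
        moreover have "trap \<alpha> \<beta>1 w (f t) = 0" using w ft by (intro trap_zero_right) auto
        ultimately show ?thesis using True by simp
      next
        case False
        have "trap \<alpha> \<beta>1 w (f t) \<le> trap \<alpha> \<beta>2 w (f t)" using w h by (intro trap_mono) auto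
        then show ?thesis using False by simp
      qed
    qed
    also have "\<dots> = integral\<^sup>L ?M (\<lambda>t. trap \<alpha> \<beta>2 w (f t)) - integral\<^sup>L ?M (\<lambda>t. trap \<alpha> \<beta>1 w (f t))"
      by (rule Bochner_Integration.integral_diff[OF ti ti])
    finally have "measure ?M A \<le> integral\<^sup>L ?M (\<lambda>t. trap \<alpha> \<beta>2 w (f t)) - integral\<^sup>L ?M (\<lambda>t. trap \<alpha> \<beta>1 w (f t))"
      using Asub by (simp add: Int_absorb2)
    then have "integral\<^sup>L ?M (\<lambda>t. trap \<alpha> \<beta>1 w (f t)) < integral\<^sup>L ?M (\<lambda>t. trap \<alpha> \<beta>2 w (f t))"
      using mA by linarith
    then show ?thesis unfolding L_def using ab by (simp add: divide_strict_right_mono)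
  qed
  have rangex: "eventually (\<lambda>n. \<forall>i\<in>{1..d n}. m - e \<le> f (x n i) \<and> f (x n i) \<le> M + e) sequentially"
    if e: "e > 0" for e
  proof (rule always_eventually, intro allI ballI)
    fix n i assume i: "i \<in> {1..d n}"
    show "m - e \<le> f (x n i) \<and> f (x n i) \<le> M + e" using fmM[OF grid_in[OF i]] e by auto
  qed
  have rangel: "eventually (\<lambda>n. \<forall>i\<in>{1..d n}. m - e \<le> lam n i \<and> lam n i \<le> M + e) sequentially"
    if e: "e > 0" for e
  proof -
    have "eventually (\<lambda>n. \<bar>eps n\<bar> < e) sequentially"
      using eps_lim e by (simp add: tendsto_iff dist_real_def) 
    then show ?thesis
    proof (rule eventually_mono, intro ballI)
      fix n i assume E: "\<bar>eps n\<bar> < e" and i: "i \<in> {1..d n}"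
      show "m - e \<le> lam n i \<and> lam n i \<le> M + e" using lam_in[OF i] E unfolding m_def M_def by auto
    qed
  qed
  have part1: "(\<lambda>n. Max {\<bar>f (x n (\<sigma> n i)) - lam n (\<tau> n i)\<bar> | i. i \<in> {1..d n}}) \<longlonglongrightarrow> 0"
    if H: "\<forall>n. \<sigma> n permutes {1..d n} \<and> \<tau> n permutes {1..d n} \<and>
                 (\<forall>i j. 1 \<le> i \<and> i \<le> j \<and> j \<le> d n \<longrightarrow>
                    f (x n (\<sigma> n i)) \<le> f (x n (\<sigma> n j)) \<and>
                    lam n (\<tau> n i) \<le> lam n (\<tau> n j))" for \<sigma> \<tau> :: "nat \<Rightarrow> nat \<Rightarrow> nat"
  proof (rule two_side[where y="\<lambda>n i. f (x n i)" and z=lam and L=L and m=m and M=M])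
    show "eventually (\<lambda>n. 0 < d n) sequentially" by (rule dpos)
    show "\<And>\<alpha> \<beta> w. w > 0 \<Longrightarrow> (\<lambda>n. (\<Sum>i=1..d n. trap \<alpha> \<beta> w (f (x n i))) / real (d n)) \<longlonglongrightarrow> L (trap \<alpha> \<beta> w)"
      by (rule convx)
    show "\<And>\<alpha> \<beta> w. w > 0 \<Longrightarrow> (\<lambda>n. (\<Sum>i=1..d n. trap \<alpha> \<beta> w (lam n i)) / real (d n)) \<longlonglongrightarrow> L (trap \<alpha> \<beta> w)"
      by (rule convl)
    show "\<And>\<alpha> \<beta>1 \<beta>2 w. w > 0 \<Longrightarrow> \<alpha> \<le> m \<Longrightarrow> m \<le> \<beta>1 + w \<Longrightarrow> \<beta>1 + w < \<beta>2 \<Longrightarrow> \<beta>2 \<le> M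
              \<Longrightarrow> L (trap \<alpha> \<beta>1 w) < L (trap \<alpha> \<beta>2 w)" by (rule gap)
    show "\<And>e. e > 0 \<Longrightarrow> eventually (\<lambda>n. \<forall>i\<in>{1..d n}. m - e \<le> f (x n i) \<and> f (x n i) \<le> M + e) sequentially"
      by (rule rangex)
    show "\<And>e. e > 0 \<Longrightarrow> eventually (\<lambda>n. \<forall>i\<in>{1..d n}. m - e \<le> lam n i \<and> lam n i \<le> M + e) sequentially"
      by (rule rangel)
    show "\<And>n. \<sigma> n permutes {1..d n}" using H by blast
    show "\<And>n. \<tau> n permutes {1..d n}" using H by blast
    show "\<And>n i j. 1 \<le> i \<Longrightarrow> i \<le> j \<Longrightarrow> j \<le> d n \<Longrightarrow> f (x n (\<sigma> n i)) \<le> f (x n (\<sigma> n j))" using H by blast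
    show "\<And>n i j. 1 \<le> i \<Longrightarrow> i \<le> j \<Longrightarrow> j \<le> d n \<Longrightarrow> lam n (\<tau> n i) \<le> lam n (\<tau> n j)" using H by blast
  qed
  have "\<forall>n. \<exists>p. p permutes {1..d n} \<and> (\<forall>i j. 1 \<le> i \<and> i \<le> j \<and> j \<le> d n \<longrightarrow> f (x n (p i)) \<le> f (x n (p j)))"
    using sort_perm[where w="\<lambda>i. f (x n i)" and D="d n" for n] by simp
  then obtain \<sigma>0 where s0: "\<And>n. \<sigma>0 n permutes {1..d n}"
    "\<And>n i j. 1 \<le> i \<and> i \<le> j \<and> j \<le> d n \<Longrightarrow> f (x n (\<sigma>0 n i)) \<le> f (x n (\<sigma>0 n j))"
    by metis
  have "\<forall>n. \<exists>p. p permutes {1..d n} \<and> (\<forall>i j. 1 \<le> i \<and> i \<le> j \<and> j \<le> d n \<longrightarrow> lam n (p i) \<le> lam n (p j))"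
    using sort_perm[where w="lam n" and D="d n" for n] by simp
  then obtain \<tau>0 where t0: "\<And>n. \<tau>0 n permutes {1..d n}"
    "\<And>n i j. 1 \<le> i \<and> i \<le> j \<and> j \<le> d n \<Longrightarrow> lam n (\<tau>0 n i) \<le> lam n (\<tau>0 n j)"
    by metis
  have P0: "(\<lambda>n. Max {\<bar>f (x n (\<sigma>0 n i)) - lam n (\<tau>0 n i)\<bar> | i. i \<in> {1..d n}}) \<longlonglongrightarrow> 0"
    by (rule part1) (use s0 t0 in blast)
  have part2: "(\<lambda>n. Min {Max {\<bar>f (x n i) - lam n (\<tau> i)\<bar> | i. i \<in> {1..d n}} | \<tau>.
                      \<tau> permutes {1..d n}}) \<longlonglongrightarrow> 0"
  proof (rule tendsto_sandwich[OF _ _ tendsto_const P0])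
    show "eventually (\<lambda>n. 0 \<le> Min {Max {\<bar>f (x n i) - lam n (\<tau> i)\<bar> | i. i \<in> {1..d n}} | \<tau>.
                      \<tau> permutes {1..d n}}) sequentially"
      using dpos
    proof eventually_elim
      case (elim n)
      let ?S = "{Max {\<bar>f (x n i) - lam n (\<tau> i)\<bar> | i. i \<in> {1..d n}} | \<tau>. \<tau> permutes {1..d n}}"
      have fS: "finite ?S" by (rule finite_perm_image)
      have neS: "?S \<noteq> {}" using permutes_id by blast
      show ?case
      proof (subst Min_ge_iff[OF fS neS], intro ballI)
        fix v assume "v \<in> ?S"
        then obtain \<tau> where v: "v = Max {\<bar>f (x n i) - lam n (\<tau> i)\<bar> | i. i \<in> {1..d n}}" by blast
        have "\<bar>f (x n 1) - lam n (\<tau> 1)\<bar> \<le> v"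
          unfolding v Setcompr_eq_image using elim by (intro Max_ge) auto
        then show "0 \<le> v" by linarith
      qed
    qed
    show "eventually (\<lambda>n. Min {Max {\<bar>f (x n i) - lam n (\<tau> i)\<bar> | i. i \<in> {1..d n}} | \<tau>.
                      \<tau> permutes {1..d n}} \<le> Max {\<bar>f (x n (\<sigma>0 n i)) - lam n (\<tau>0 n i)\<bar> | i. i \<in> {1..d n}}) sequentially"
    proof (rule always_eventually, intro allI)
      fix n
      let ?S = "{Max {\<bar>f (x n i) - lam n (\<tau> i)\<bar> | i. i \<in> {1..d n}} | \<tau>. \<tau> permutes {1..d n}}"
      define \<rho> where "\<rho> = \<tau>0 n \<circ> inv (\<sigma>0 n)"
      have \<rho>p: "\<rho> permutes {1..d n}" unfolding \<rho>_def
        by (intro permutes_compose permutes_inv s0 t0)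
      have fS: "finite ?S" by (rule finite_perm_image)
      have eqs: "(\<lambda>i. \<bar>f (x n i) - lam n (\<rho> i)\<bar>) ` {1..d n} = (\<lambda>i. \<bar>f (x n (\<sigma>0 n i)) - lam n (\<tau>0 n i)\<bar>) ` {1..d n}"
      proof -
        have "(\<lambda>i. \<bar>f (x n i) - lam n (\<rho> i)\<bar>) ` {1..d n} = (\<lambda>i. \<bar>f (x n i) - lam n (\<rho> i)\<bar>) ` (\<sigma>0 n ` {1..d n})"
          using permutes_image[OF s0(1)[of n]] by simp
        also have "\<dots> = (\<lambda>i. \<bar>f (x n (\<sigma>0 n i)) - lam n (\<tau>0 n i)\<bar>) ` {1..d n}"
          unfolding image_image \<rho>_def by (simp add: permutes_inverses(2)[OF s0(1)[of n]])
        finally show ?thesis .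
      qed
      have "Max {\<bar>f (x n i) - lam n (\<rho> i)\<bar> | i. i \<in> {1..d n}} \<in> ?S" using \<rho>p by blast
      then have "Min ?S \<le> Max {\<bar>f (x n i) - lam n (\<rho> i)\<bar> | i. i \<in> {1..d n}}" by (rule Min_le[OF fS])
      also have "\<dots> = Max {\<bar>f (x n (\<sigma>0 n i)) - lam n (\<tau>0 n i)\<bar> | i. i \<in> {1..d n}}"
        unfolding Setcompr_eq_image eqs ..
      finally show "Min ?S \<le> Max {\<bar>f (x n (\<sigma>0 n i)) - lam n (\<tau>0 n i)\<bar> | i. i \<in> {1..d n}}" .
    qed
  qed
  show ?thesis using part1 part2 by blast
qed


end
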